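(* Assume $\mathrm{recc}(C)\subseteq\mathrm{recc}(P^B)$. Fix $k\in N_2$ and assume $N_0\not\subseteq J$. Let $S\subseteq M'$. Then every $x\in P^B\setminus S_k^C$ satisfies $$\sum_{i\in S}x_i-\sum_{j\in N\setminus J}\frac{x_j}{\varepsilon'_j(S)}\le0.$$
   Context: Let $A\in\mathbb{R}^{m\times n}$ have full row rank, $b\in\mathbb{R}^m$, and $P=\{x\in\mathbb{R}^n_+:Ax=b\}$. Let $C\subseteq\mathbb{R}^n$ be an open convex set. Fix a basis $B$ of $P$ with nonbasic set $N=\{1,\dots,n\}\setminus B$. Write $P=\{x:x_i=\bar b_i-\sum_{j\in N}\bar a_{ij}x_j\ (i\in B),\ x\ge0\}$ with $\bar b\ge0$. The basic solution $\bar x$ has $\bar x_i=\bar b_i$ ($i\in B$) and $0$ ($i\in N$). $P^B$ is obtained by dropping $x_i\ge0$ for $i\in B$. For $j\in N$, $\bar r^j$ has $\bar r^j_k=-\bar a_{kj}$ ($k\in B$), $\bar r^j_j=1$, and $0$ otherwise. Thus $P^B=\{\bar x+\sum_{j\in N}x_j\bar r^j:x_j\ge0\}$, and for $x\in P^B$ the $x_j$ ($j\in N$) are the coefficients in this representation. It is assumed that $\bar x\notin\mathrm{cl}(C)$. For $j\in N$, $\alpha_j=\inf\{\lambda\ge0:\bar x+\lambda\bar r^j\in C\}$ and $\beta_j=\sup\{\lambda\ge0:\bar x+\lambda\bar r^j\in C\}$, with $\alpha_j=+\infty$, $\beta_j=-\infty$ if the halfline misses $C$. Define - $N_0=\{j:\alpha_j=+\infty,\beta_j=-\infty\}$;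 - $N_1=\{j:\alpha_j\in(0,\infty),\beta_j=+\infty\}$; - $N_2=\{j:\alpha_j\in(0,\infty),\beta_j\in(\alpha_j,\infty)\}$. For a set $K$, $\mathrm{recc}(K)=\{d:x+\lambda d\in K\ \forall x\in K,\lambda\ge0\}$. We use the convention $t/+\infty=0$. For $k\in N_2$, let $S_k^C=\{\bar x\}+\mathrm{conv}\big(\bigcup_{j\in N_2}\{\lambda\bar r^j:0\le\lambda<\beta_j\}\big)+\{\lambda\bar r^k:\lambda\le0\}+\mathrm{recc}(C)$. Let $J=\{i\in N:\bar r^i\in\mathrm{recc}(S_k^C)\}$. For $i\in J$ and $j\in N\setminus J$, let $\gamma'_{ij}=\sup\{\gamma\ge0:\bar r^i+\gamma\bar r^j\in\mathrm{recc}(S_k^C)\}$. Let $M'=\{i\in J:\gamma'_{ij}>0\ \forall j\in N\setminus J\}$. For $S\subseteq M'$ and $j\in N\setminus J$, $\varepsilon'_j(S)=\min_{i\in S}\gamma'_{ij}$ if $S\ne\emptyset$, and $+\infty$ otherwise. *)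

theory Defs
  imports "HOL-Analysis.Analysis" "HOL-Library.Extended_Real"
begin

definition recc :: "('a::real_vector) set \<Rightarrow> 'a set" where
  "recc K = {d. \<forall>x\<in>K. \<forall>l::real. l \<ge> 0 \<longrightarrow> x + l *\<^sub>R d \<in> K}"

definition xbar :: "'n::finite set \<Rightarrow> ('n \<Rightarrow> real) \<Rightarrow> real^'n" where
  "xbar B bbar = (\<chi> i. if i \<in> B then bbar i else 0)"

definition rbar :: "'n::finite set \<Rightarrow> ('n \<Rightarrow> 'n \<Rightarrow> real) \<Rightarrow> 'n \<Rightarrow> real^'n" where
  "rbar B abar j = (\<chi> k. if k \<in> B then - abar k j else if k = j then 1 else 0)"

text \<open>P^B: drop the nonnegativity constraints on the basic variables.\<close>
definition PB :: "real^'n^'m \<Rightarrow> real^'m \<Rightarrow> 'n set \<Rightarrow> (real^'n) set" where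
  "PB A b B = {x. A *v x = b \<and> (\<forall>j. j \<notin> B \<longrightarrow> 0 \<le> x $ j)}"

text \<open>alpha_j and beta_j (inf / sup over the empty set give +inf / -inf).\<close>
definition alpha :: "(real^'n::finite) set \<Rightarrow> real^'n \<Rightarrow> real^'n \<Rightarrow> ereal" where
  "alpha C x0 r = Inf (ereal ` {l. l \<ge> 0 \<and> x0 + l *\<^sub>R r \<in> C})"

definition beta :: "(real^'n::finite) set \<Rightarrow> real^'n \<Rightarrow> real^'n \<Rightarrow> ereal" where
  "beta C x0 r = Sup (ereal ` {l. l \<ge> 0 \<and> x0 + l *\<^sub>R r \<in> C})"

definition N0 :: "'n::finite set \<Rightarrow> ('n \<Rightarrow> 'n \<Rightarrow> real) \<Rightarrow> ('n \<Rightarrow> real) \<Rightarrow> (real^'n) set \<Rightarrow> 'n set" where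
  "N0 B abar bbar C = {j. j \<notin> B \<and>
      alpha C (xbar B bbar) (rbar B abar j) = \<infinity> \<and> beta C (xbar B bbar) (rbar B abar j) = - \<infinity>}"

definition N2 :: "'n::finite set \<Rightarrow> ('n \<Rightarrow> 'n \<Rightarrow> real) \<Rightarrow> ('n \<Rightarrow> real) \<Rightarrow> (real^'n) set \<Rightarrow> 'n set" where
  "N2 B abar bbar C = {j. j \<notin> B \<and>
      0 < alpha C (xbar B bbar) (rbar B abar j) \<and> alpha C (xbar B bbar) (rbar B abar j) < \<infinity> \<and>
      alpha C (xbar B bbar) (rbar B abar j) < beta C (xbar B bbar) (rbar B abar j) \<and>
      beta C (xbar B bbar) (rbar B abar j) < \<infinity>}"

definition SkC :: "'n::finite set \<Rightarrow> ('n \<Rightarrow> 'n \<Rightarrow> real) \<Rightarrow> ('n \<Rightarrow> real) \<Rightarrow> (real^'n) set \<Rightarrow> 'n \<Rightarrow> (real^'n) set" where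
  "SkC B abar bbar C k =
     {xbar B bbar + u + l *\<^sub>R rbar B abar k + w | u l w.
        u \<in> convex hull (\<Union>j\<in>N2 B abar bbar C.
               {m *\<^sub>R rbar B abar j | m. 0 \<le> m \<and> ereal m < beta C (xbar B bbar) (rbar B abar j)})
      \<and> l \<le> 0 \<and> w \<in> recc C}"

definition Jset :: "'n::finite set \<Rightarrow> ('n \<Rightarrow> 'n \<Rightarrow> real) \<Rightarrow> ('n \<Rightarrow> real) \<Rightarrow> (real^'n) set \<Rightarrow> 'n \<Rightarrow> 'n set" where
  "Jset B abar bbar C k = {i. i \<notin> B \<and> rbar B abar i \<in> recc (SkC B abar bbar C k)}"

definition gamma' :: "'n::finite set \<Rightarrow> ('n \<Rightarrow> 'n \<Rightarrow> real) \<Rightarrow> ('n \<Rightarrow> real) \<Rightarrow> (real^'n) set \<Rightarrow> 'n \<Rightarrow> 'n \<Rightarrow> 'n \<Rightarrow> ereal" where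
  "gamma' B abar bbar C k i j =
     Sup (ereal ` {g. g \<ge> 0 \<and> rbar B abar i + g *\<^sub>R rbar B abar j \<in> recc (SkC B abar bbar C k)})"

definition M' :: "'n::finite set \<Rightarrow> ('n \<Rightarrow> 'n \<Rightarrow> real) \<Rightarrow> ('n \<Rightarrow> real) \<Rightarrow> (real^'n) set \<Rightarrow> 'n \<Rightarrow> 'n set" where
  "M' B abar bbar C k = {i \<in> Jset B abar bbar C k.
     \<forall>j. j \<notin> B \<and> j \<notin> Jset B abar bbar C k \<longrightarrow> gamma' B abar bbar C k i j > 0}"

definition eps' :: "'n::finite set \<Rightarrow> ('n \<Rightarrow> 'n \<Rightarrow> real) \<Rightarrow> ('n \<Rightarrow> real) \<Rightarrow> (real^'n) set \<Rightarrow> 'n \<Rightarrow> 'n set \<Rightarrow> 'n \<Rightarrow> ereal" where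
  "eps' B abar bbar C k S j = (if S = {} then \<infinity> else Min ((\<lambda>i. gamma' B abar bbar C k i j) ` S))"

definition divinf :: "real \<Rightarrow> ereal \<Rightarrow> real" where
  "divinf t e = (if e = \<infinity> then 0 else t / real_of_ereal e)"

end

theory Submission imports Defs begin

lemma indep_coeffs:
  fixes c :: "'n \<Rightarrow> 'a::euclidean_space"
  assumes "independent (c ` B)" "inj_on c B"
    and "(\<Sum>i\<in>B. u i *\<^sub>R c i) = 0" "i \<in> B"
  shows "u i = 0"
proof -
  have "(\<Sum>v\<in>c ` B. u (inv_into B c v) *\<^sub>R v) = (\<Sum>i\<in>B. u i *\<^sub>R c i)"
    using assms(2) by (simp add: sum.reindex)
  then have "(\<Sum>v\<in>c ` B. u (inv_into B c v) *\<^sub>R v) = 0" using assms(3) by simp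
  then have "u (inv_into B c (c i)) = 0"
    using assms(1,4) independent_explicit[of "c ` B"] by (meson imageI)
  then show ?thesis using assms(2,4) by simp
qed

lemma recc_zero: "0 \<in> recc K"
  by (simp add: recc_def)

lemma recc_add: "d1 \<in> recc K \<Longrightarrow> d2 \<in> recc K \<Longrightarrow> d1 + d2 \<in> recc K"
  unfolding recc_def
proof (clarify)
  fix x :: 'a and l :: real
  assume h1: "\<forall>x\<in>K. \<forall>l. 0 \<le> l \<longrightarrow> x + l *\<^sub>R d1 \<in> K"
    and h2: "\<forall>x\<in>K. \<forall>l. 0 \<le> l \<longrightarrow> x + l *\<^sub>R d2 \<in> K" and x: "x \<in> K" and l: "0 \<le> l"
  have "x + l *\<^sub>R d1 \<in> K" using h1 x l by blast
  then have "(x + l *\<^sub>R d1) + l *\<^sub>R d2 \<in> K" using h2 l by blast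
  then show "x + l *\<^sub>R (d1 + d2) \<in> K" by (simp add: scaleR_right_distrib add.assoc)
qed

lemma recc_scale: "d \<in> recc K \<Longrightarrow> (c::real) \<ge> 0 \<Longrightarrow> c *\<^sub>R d \<in> recc K"
  unfolding recc_def by (simp add: zero_le_mult_iff)

lemma recc_sum: "finite I \<Longrightarrow> (\<And>i. i \<in> I \<Longrightarrow> f i \<in> recc K) \<Longrightarrow> sum f I \<in> recc K"
  by (induction I rule: finite_induct) (auto simp: recc_zero recc_add)

lemma recc_interp:
  assumes "a \<in> recc K" "a + g' *\<^sub>R v \<in> recc K" "0 \<le> g" "g \<le> g'" "0 < g'"
  shows "a + g *\<^sub>R v \<in> recc K"
proof -
  have "a + g *\<^sub>R v = (1 - g/g') *\<^sub>R a + (g/g') *\<^sub>R (a + g' *\<^sub>R v)"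
    using assms(5) by (simp add: algebra_simps)
  moreover have "(1 - g/g') *\<^sub>R a \<in> recc K" using assms by (intro recc_scale) auto
  moreover have "(g/g') *\<^sub>R (a + g' *\<^sub>R v) \<in> recc K" using assms by (intro recc_scale) auto
  ultimately show ?thesis by (simp add: recc_add)
qed

lemma rep_lemma:
  fixes A :: "real^'n^'m" and b :: "real^'m" and B :: "'n set"
    and abar :: "'n \<Rightarrow> 'n \<Rightarrow> real" and bbar :: "'n \<Rightarrow> real" and x :: "real^'n"
  assumes basis_inj: "inj_on (\<lambda>i. column i A) B"
    and basis_indep: "independent ((\<lambda>i. column i A) ` B)"
    and abar_def: "\<And>j. j \<notin> B \<Longrightarrow> column j A = (\<Sum>i\<in>B. abar i j *\<^sub>R column i A)"
    and bbar_def: "b = (\<Sum>i\<in>B. bbar i *\<^sub>R column i A)"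
    and Ax: "A *v x = b"
  shows "x = xbar B bbar + (\<Sum>l\<in>-B. x$l *\<^sub>R rbar B abar l)"
proof -
  define c where "c = (\<lambda>i. column i A)"
  have "b = (\<Sum>l\<in>UNIV. x$l *\<^sub>R c l)"
    using Ax by (simp add: matrix_mult_sum c_def scalar_mult_eq_scaleR)
  also have "\<dots> = (\<Sum>l\<in>B. x$l *\<^sub>R c l) + (\<Sum>l\<in>-B. x$l *\<^sub>R c l)"
    by (subst sum.union_disjoint[symmetric]) auto
  also have "(\<Sum>l\<in>-B. x$l *\<^sub>R c l) = (\<Sum>l\<in>-B. x$l *\<^sub>R (\<Sum>i\<in>B. abar i l *\<^sub>R c i))"
    using abar_def by (simp add: c_def)
  also have "\<dots> = (\<Sum>i\<in>B. (\<Sum>l\<in>-B. x$l * abar i l) *\<^sub>R c i)"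
    by (simp add: scaleR_sum_right scaleR_sum_left sum.swap[of _ "-B"])
  finally have e1: "(\<Sum>i\<in>B. bbar i *\<^sub>R c i) = (\<Sum>i\<in>B. x$i *\<^sub>R c i) + (\<Sum>i\<in>B. (\<Sum>l\<in>-B. x$l * abar i l) *\<^sub>R c i)"
    using bbar_def by (simp add: c_def)
  have "(\<Sum>i\<in>B. (x$i + (\<Sum>l\<in>-B. x$l * abar i l) - bbar i) *\<^sub>R c i) = 
     (\<Sum>i\<in>B. x$i *\<^sub>R c i) + (\<Sum>i\<in>B. (\<Sum>l\<in>-B. x$l * abar i l) *\<^sub>R c i) - (\<Sum>i\<in>B. bbar i *\<^sub>R c i)"
    by (simp only: scaleR_left_diff_distrib scaleR_left_distrib sum.distrib sum_subtractf)
  then have "(\<Sum>i\<in>B. (x$i + (\<Sum>l\<in>-B. x$l * abar i l) - bbar i) *\<^sub>R c i) = 0"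
    using e1 by simp
  then have coef: "\<And>i. i \<in> B \<Longrightarrow> x$i + (\<Sum>l\<in>-B. x$l * abar i l) - bbar i = 0"
    using indep_coeffs[OF basis_indep[folded c_def] basis_inj[folded c_def], of "\<lambda>i. x$i + (\<Sum>l\<in>-B. x$l * abar i l) - bbar i"] by simp
  show ?thesis
  proof (subst vec_eq_iff, intro allI)
    fix p
    show "x$p = (xbar B bbar + (\<Sum>l\<in>-B. x$l *\<^sub>R rbar B abar l))$p"
    proof (cases "p \<in> B")
      case True
      then show ?thesis using coef[OF True]
        by (simp add: xbar_def rbar_def sum_component sum_negf)
    next
      case False
      have "(\<Sum>l\<in>-B. x$l * (if p = l then 1 else 0)) = (\<Sum>l\<in>-B. if p = l then x$l else 0)"
        by (rule sum.cong) auto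
      also have "\<dots> = x$p" using False by (simp add: sum.delta')
      finally have "(\<Sum>l\<in>-B. x$l * (if p = l then 1 else 0)) = x$p" .
      then show ?thesis using False
        by (simp add: xbar_def rbar_def sum_component)
    qed
  qed
qed

theorem theorem6:
  fixes A :: "real^'n^'m" and b :: "real^'m" and B :: "'n set"
    and abar :: "'n \<Rightarrow> 'n \<Rightarrow> real" and bbar :: "'n \<Rightarrow> real"
    and C :: "(real^'n) set" and k :: 'n and S :: "'n set" and x :: "real^'n"
  assumes full_row_rank: "rank A = CARD('m)"
    and basis_card: "card B = CARD('m)"
    and basis_inj: "inj_on (\<lambda>i. column i A) B"
    and basis_indep: "independent ((\<lambda>i. column i A) ` B)"
    and abar_def: "\<And>j. j \<notin> B \<Longrightarrow> column j A = (\<Sum>i\<in>B. abar i j *\<^sub>R column i A)"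
    and bbar_def: "b = (\<Sum>i\<in>B. bbar i *\<^sub>R column i A)"
    and feasible: "\<And>i. i \<in> B \<Longrightarrow> bbar i \<ge> 0"
    and C_open: "open C" and C_convex: "convex C"
    and xbar_notin: "xbar B bbar \<notin> closure C"
    and recc_sub: "recc C \<subseteq> recc (PB A b B)"
    and k_N2: "k \<in> N2 B abar bbar C"
    and N0_not_J: "\<not> N0 B abar bbar C \<subseteq> Jset B abar bbar C k"
    and S_sub: "S \<subseteq> M' B abar bbar C k"
    and x_in: "x \<in> PB A b B - SkC B abar bbar C k"
  shows "(\<Sum>i\<in>S. x $ i)
           - (\<Sum>j\<in>{j. j \<notin> B \<and> j \<notin> Jset B abar bbar C k}. divinf (x $ j) (eps' B abar bbar C k S j))
         \<le> 0"
proof -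
  define r where "r = rbar B abar"
  define xb where "xb = xbar B bbar"
  define SK where "SK = SkC B abar bbar C k"
  define R where "R = recc SK"
  define J where "J = Jset B abar bbar C k"
  define Nc where "Nc = {j. j \<notin> B \<and> j \<notin> J}"
  define e where "e = eps' B abar bbar C k S"
  define gm where "gm = gamma' B abar bbar C k"
  define X where "X = (\<Sum>i\<in>S. x$i)"
  define D where "D = (\<Sum>j\<in>Nc. divinf (x $ j) (e j))"
  have Ax: "A *v x = b" and xnn: "\<And>j. j \<notin> B \<Longrightarrow> 0 \<le> x$j" and xnS: "x \<notin> SK"
    using x_in by (auto simp: PB_def SK_def)
  have rep: "x = xb + (\<Sum>l\<in>-B. x$l *\<^sub>R r l)"
    unfolding xb_def r_def by (rule rep_lemma[OF basis_inj basis_indep abar_def bbar_def Ax])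
  have xbS: "xb \<in> SK"
  proof -
    have "0 < alpha C (xbar B bbar) (rbar B abar k)" "alpha C (xbar B bbar) (rbar B abar k) < beta C (xbar B bbar) (rbar B abar k)"
      using k_N2 unfolding N2_def by auto
    then have bpos: "0 < beta C (xbar B bbar) (rbar B abar k)" by (rule order.strict_trans)
    have "0 \<in> {m *\<^sub>R rbar B abar k | m. 0 \<le> m \<and> ereal m < beta C (xbar B bbar) (rbar B abar k)}"
      using bpos by (metis (mono_tags, lifting) mem_Collect_eq order_refl scale_zero_left zero_ereal_def)
    then have "0 \<in> (\<Union>j\<in>N2 B abar bbar C.
               {m *\<^sub>R rbar B abar j | m. 0 \<le> m \<and> ereal m < beta C (xbar B bbar) (rbar B abar j)})"
      using k_N2 by blast
    then have "0 \<in> convex hull (\<Union>j\<in>N2 B abar bbar C.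
               {m *\<^sub>R rbar B abar j | m. 0 \<le> m \<and> ereal m < beta C (xbar B bbar) (rbar B abar j)})"
      by (meson hull_inc)
    then have "xbar B bbar + 0 + (0::real) *\<^sub>R rbar B abar k + 0 \<in> SkC B abar bbar C k"
      unfolding SkC_def mem_Collect_eq
      by (intro exI[of _ 0] conjI refl recc_zero order_refl)
    then show ?thesis by (simp add: SK_def xb_def)
  qed
  have notR: "x - xb \<notin> R"
  proof
    assume "x - xb \<in> R"
    then have "\<forall>y\<in>SK. \<forall>l::real. l \<ge> 0 \<longrightarrow> y + l *\<^sub>R (x - xb) \<in> SK" by (simp add: R_def recc_def)
    then have "xb + (1::real) *\<^sub>R (x - xb) \<in> SK" using xbS zero_le_one by blast
    then show False using xnS by simp
  qed
  have JN: "J \<subseteq> -B" unfolding J_def Jset_def by auto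
  have rJ: "\<And>i. i \<in> J \<Longrightarrow> r i \<in> R" unfolding J_def Jset_def R_def SK_def r_def by auto
  have SJ: "S \<subseteq> J" using S_sub unfolding M'_def J_def by auto
  have gpos: "\<And>i j. i \<in> S \<Longrightarrow> j \<in> Nc \<Longrightarrow> gm i j > 0"
    using S_sub unfolding M'_def Nc_def J_def gm_def by auto
  have gin: "\<And>i j g. i \<in> S \<Longrightarrow> 0 \<le> g \<Longrightarrow> ereal g < gm i j \<Longrightarrow> r i + g *\<^sub>R r j \<in> R"
  proof -
    fix i j g assume iS: "i \<in> S" and g0: "0 \<le> g" and glt: "ereal g < gm i j"
    then obtain g' where g': "0 \<le> g'" "r i + g' *\<^sub>R r j \<in> R" "g < g'"
      unfolding gm_def gamma'_def less_Sup_iff R_def SK_def r_def by auto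
    show "r i + g *\<^sub>R r j \<in> R"
      using recc_interp[of "r i" SK g' "r j" g] g' g0 rJ[of i] iS SJ unfolding R_def by auto
  qed
  show ?thesis
  proof (rule ccontr)
    assume "\<not> ?thesis"
    then have lt: "D < X" unfolding D_def X_def Nc_def J_def e_def by simp
    have Sne: "S \<noteq> {}"
    proof
      assume "S = {}"
      then have "D = 0" "X = 0" unfolding D_def X_def e_def eps'_def divinf_def by auto
      then show False using lt by simp
    qed
    have e_le: "\<And>i j. i \<in> S \<Longrightarrow> e j \<le> gm i j"
      unfolding e_def eps'_def gm_def using Sne by auto
    have e_pos: "\<And>j. j \<in> Nc \<Longrightarrow> e j > 0"
      unfolding e_def eps'_def using Sne gpos[unfolded gm_def] by (auto simp: Min_gr_iff)
    have div_nn: "\<And>j. j \<in> Nc \<Longrightarrow> 0 \<le> divinf (x$j) (e j)"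
    proof -
      fix j assume j: "j \<in> Nc"
      have "0 \<le> x$j" using j xnn unfolding Nc_def by auto
      moreover have "e j \<noteq> \<infinity> \<Longrightarrow> 0 < real_of_ereal (e j)"
        using e_pos[OF j] by (cases "e j") auto
      ultimately show "0 \<le> divinf (x$j) (e j)" unfolding divinf_def by auto
    qed
    define eta where "eta = (X - D) / (real (card Nc) + 1)"
    have eta_pos: "eta > 0" unfolding eta_def using lt by simp
    have "\<forall>j\<in>Nc. \<exists>g. 0 < g \<and> (\<forall>i\<in>S. r i + g *\<^sub>R r j \<in> R) \<and> x$j / g \<le> divinf (x$j) (e j) + eta"
    proof
      fix j assume j: "j \<in> Nc"
      have xj: "0 \<le> x$j" using j xnn unfolding Nc_def by auto
      show "\<exists>g. 0 < g \<and> (\<forall>i\<in>S. r i + g *\<^sub>R r j \<in> R) \<and> x$j / g \<le> divinf (x$j) (e j) + eta"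
      proof (cases "e j = \<infinity>")
        case True
        define g where "g = x$j / eta + 1"
        have "0 \<le> x$j / eta" using xj eta_pos by simp
        then have g0: "0 < g" unfolding g_def by linarith
        have "x$j \<le> eta * g" unfolding g_def using eta_pos by (simp add: algebra_simps)
        then have "x$j / g \<le> eta" using g0 by (simp add: divide_le_eq mult.commute)
        moreover have "\<forall>i\<in>S. r i + g *\<^sub>R r j \<in> R"
        proof
          fix i assume iS: "i \<in> S"
          then have "gm i j = \<infinity>" using e_le[of i j] True by simp
          then have "ereal g < gm i j" by simp
          then show "r i + g *\<^sub>R r j \<in> R" using gin iS g0 by auto
        qed
        ultimately show ?thesis using g0 True unfolding divinf_def by auto
      next
        case False
        then obtain E where E: "e j = ereal E" using e_pos[OF j] by (cases "e j") auto
        have E0: "E > 0" using e_pos[OF j] E by simp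
        define g where "g = E * (x$j + 1) / (x$j + 1 + eta * E)"
        have p1: "0 < x$j + 1" using xj by simp
        have p2: "0 < eta * E" using E0 eta_pos by simp
        have g0: "0 < g" unfolding g_def using E0 p1 p2 by simp
        have gE: "g < E" unfolding g_def using E0 xj eta_pos by (simp add: divide_less_eq)
        have "x$j / g = x$j / E + x$j * eta / (x$j + 1)"
          unfolding g_def using E0 xj eta_pos by (simp add: field_simps)
        also have "x$j * eta / (x$j + 1) \<le> eta"
          using xj eta_pos by (simp add: divide_le_eq)
        finally have "x$j / g \<le> x$j / E + eta" by simp
        moreover have "\<forall>i\<in>S. r i + g *\<^sub>R r j \<in> R"
        proof
          fix i assume "i \<in> S"
          then have "ereal g < gm i j" using e_le[of i j] E gE by (metis less_ereal.simps(1) order_less_le_trans)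
          then show "r i + g *\<^sub>R r j \<in> R" using gin \<open>i \<in> S\<close> g0 by auto
        qed
        ultimately show ?thesis using g0 False E unfolding divinf_def by auto
      qed
    qed
    then obtain g where g: "\<And>j. j \<in> Nc \<Longrightarrow> 0 < g j"
      "\<And>i j. j \<in> Nc \<Longrightarrow> i \<in> S \<Longrightarrow> r i + g j *\<^sub>R r j \<in> R"
      "\<And>j. j \<in> Nc \<Longrightarrow> x$j / g j \<le> divinf (x$j) (e j) + eta"
      by metis
    define T where "T = (\<Sum>j\<in>Nc. x$j / g j)"
    have "T \<le> (\<Sum>j\<in>Nc. divinf (x$j) (e j) + eta)" unfolding T_def by (rule sum_mono) (rule g(3))
    also have "\<dots> = D + real (card Nc) * eta" unfolding D_def by (simp add: sum.distrib)
    also have "\<dots> < X"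
    proof -
      have "real (card Nc) * eta < (real (card Nc) + 1) * eta" using eta_pos by simp
      also have "\<dots> = X - D" unfolding eta_def by simp
      finally show ?thesis by simp
    qed
    finally have TX: "T < X" .
    have "\<And>j. j \<in> Nc \<Longrightarrow> 0 \<le> x$j / g j" using g(1) xnn by (simp add: Nc_def less_imp_le)
    then have T0: "0 \<le> T" unfolding T_def by (intro sum_nonneg)
    have X0: "X > 0" using T0 TX by simp
    have xS: "\<And>i. i \<in> S \<Longrightarrow> 0 \<le> x$i" using SJ JN xnn by auto
    define V1 where "V1 = (\<Sum>i\<in>S. \<Sum>j\<in>Nc. (x$i / X * (x$j / g j)) *\<^sub>R (r i + g j *\<^sub>R r j))"
    define V2 where "V2 = (\<Sum>i\<in>S. (x$i * (1 - T / X)) *\<^sub>R r i)"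
    define V3 where "V3 = (\<Sum>i\<in>J - S. x$i *\<^sub>R r i)"
    have cnn: "\<And>i j. i \<in> S \<Longrightarrow> j \<in> Nc \<Longrightarrow> 0 \<le> x$i / X * (x$j / g j)"
    proof -
      fix i j assume "i \<in> S" "j \<in> Nc"
      then have "0 \<le> x$i" "0 \<le> x$j" "0 < g j" using xS xnn g(1) by (auto simp: Nc_def)
      then show "0 \<le> x$i / X * (x$j / g j)" using X0 by simp
    qed
    have V1R: "V1 \<in> R" unfolding V1_def R_def
      using g(2)[unfolded R_def] cnn by (intro recc_sum recc_scale) auto
    have V2R: "V2 \<in> R" unfolding V2_def R_def
      using xS X0 TX rJ SJ unfolding R_def
      by (intro recc_sum recc_scale) auto
    have V3R: "V3 \<in> R" unfolding V3_def R_def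
      using xnn rJ JN unfolding R_def
      by (intro recc_sum recc_scale) auto
    have split: "-B = (J - S) \<union> S \<union> Nc" unfolding Nc_def using JN SJ by auto
    have "(\<Sum>l\<in>-B. x$l *\<^sub>R r l) = V3 + ((\<Sum>i\<in>S. x$i *\<^sub>R r i) + (\<Sum>j\<in>Nc. x$j *\<^sub>R r j))"
      unfolding split V3_def using SJ
      by (subst sum.union_disjoint; (subst sum.union_disjoint)?) (auto simp: Nc_def add.assoc)
    also have "(\<Sum>i\<in>S. x$i *\<^sub>R r i) + (\<Sum>j\<in>Nc. x$j *\<^sub>R r j) = V1 + V2"
    proof -
      have a: "V1 = (\<Sum>i\<in>S. (x$i / X * T) *\<^sub>R r i) + (\<Sum>j\<in>Nc. ((\<Sum>i\<in>S. x$i) / X * x$j) *\<^sub>R r j)"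
      proof -
        have "V1 = (\<Sum>i\<in>S. \<Sum>j\<in>Nc. (x$i / X * (x$j / g j)) *\<^sub>R r i)
                 + (\<Sum>i\<in>S. \<Sum>j\<in>Nc. (x$i / X * x$j) *\<^sub>R r j)"
          unfolding V1_def sum.distrib[symmetric] scaleR_right_distrib
        proof (intro sum.cong refl)
          fix i j assume "j \<in> Nc"
          then have "g j \<noteq> 0" using g(1) by fastforce
          then show "(x$i / X * (x$j / g j)) *\<^sub>R r i + (x$i / X * (x$j / g j)) *\<^sub>R g j *\<^sub>R r j
             = (x$i / X * (x$j / g j)) *\<^sub>R r i + (x$i / X * x$j) *\<^sub>R r j" by simp
        qed
        also have "(\<Sum>i\<in>S. \<Sum>j\<in>Nc. (x$i / X * (x$j / g j)) *\<^sub>R r i) = (\<Sum>i\<in>S. (x$i / X * T) *\<^sub>R r i)"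
          unfolding T_def by (simp add: scaleR_sum_left[symmetric] sum_distrib_left)
        also have "(\<Sum>i\<in>S. \<Sum>j\<in>Nc. (x$i / X * x$j) *\<^sub>R r j) = (\<Sum>j\<in>Nc. ((\<Sum>i\<in>S. x$i) / X * x$j) *\<^sub>R r j)"
          by (subst sum.swap) (simp add: scaleR_sum_left[symmetric] sum_distrib_right sum_divide_distrib)
        finally show ?thesis .
      qed
      have s1: "(\<Sum>i\<in>S. x$i) / X = 1" using X0 unfolding X_def by simp
      have b1: "V1 = (\<Sum>i\<in>S. (x$i / X * T) *\<^sub>R r i) + (\<Sum>j\<in>Nc. x$j *\<^sub>R r j)"
        using a unfolding s1 by simp
      have b2: "(\<Sum>i\<in>S. (x$i / X * T) *\<^sub>R r i) + V2 = (\<Sum>i\<in>S. x$i *\<^sub>R r i)"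
        unfolding V2_def sum.distrib[symmetric]
      proof (intro sum.cong refl)
        fix i
        have "x$i / X * T + x$i * (1 - T / X) = x$i" using X0 by (simp add: field_simps)
        then show "(x$i / X * T) *\<^sub>R r i + (x$i * (1 - T / X)) *\<^sub>R r i = x$i *\<^sub>R r i"
          by (metis scaleR_left_distrib)
      qed
      show ?thesis unfolding b1 b2[symmetric] by (simp add: algebra_simps)
    qed
    finally have "x - xb = V3 + (V1 + V2)" using rep by (simp add: algebra_simps)
    then have "x - xb \<in> R" using V1R V2R V3R by (simp add: recc_add R_def)
    then show False using notR by simp
  qed
qed

end
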